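(* Let $G$ and $H$ be non-empty locally finite graphs. If $N(G)\cong N(H)$ as simplicial complexes, then $K_2\times G$ and $K_2\times H$ are $\times$-homotopy equivalent.
   Context: A graph $G$ is a set $V(G)$ with a symmetric subset $E(G)\subset V(G)\times V(G)$ (loops allowed); $N(v)=\{w:(v,w)\in E(G)\}$; $G$ is locally finite if every $N(v)$ is finite. The neighborhood complex $N(G)$ is the simplicial complex whose vertices are the non-isolated vertices of $G$ and whose simplices are the finite subsets contained in some $N(v)$. $K_2\times G$ has vertex set $\{1,2\}\times V(G)$, $((i,x),(j,y))$ an edge iff $i\neq j$ and $(x,y)\in E(G)$. For $n\ge0$, $I_n$ is the graph with vertices $\{0,\dots,n\}$ and edges $(x,y)$ with $|x-y|\le1$ (so with loops). Graph homomorphisms $f,g:G\to H$ are $\times$-homotopic if for some $n\ge0$ there is a graph homomorphism $K:G\times I_n\to H$ (tensor product: $((x,i),(x',j))$ an edge iff $(x,x')\in E(G)$ and $|i-j|\le1$) with $K(x,0)=f(x)$ and $K(x,n)=g(x)$; this generates an equivalence relation $\simeq_\times$. $f:G\to H$ is a $\times$-homotopy equivalence if there is $h:H\to G$ with $hf\simeq_\times\mathrm{id}_G$ and $fh\simeq_\times\mathrm{id}_H$. *)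

theory Defs
  imports Main
begin

text \<open>A graph is a vertex set together with a symmetric edge relation on it (loops allowed).\<close>
type_synonym 'a graph = "'a set \<times> ('a \<times> 'a) set"

definition verts :: "'a graph \<Rightarrow> 'a set" where "verts G = fst G"
definition edges :: "'a graph \<Rightarrow> ('a \<times> 'a) set" where "edges G = snd G"

definition is_graph :: "'a graph \<Rightarrow> bool" where
  "is_graph G \<longleftrightarrow> edges G \<subseteq> verts G \<times> verts G \<and> sym (edges G)"

definition nbhd :: "'a graph \<Rightarrow> 'a \<Rightarrow> 'a set" where
  "nbhd G v = {w. (v, w) \<in> edges G}"

definition locally_finite :: "'a graph \<Rightarrow> bool" where
  "locally_finite G \<longleftrightarrow> (\<forall>v\<in>verts G. finite (nbhd G v))"

definition nc_verts :: "'a graph \<Rightarrow> 'a set" where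
  "nc_verts G = {v \<in> verts G. nbhd G v \<noteq> {}}"

definition nc_simplices :: "'a graph \<Rightarrow> 'a set set" where
  "nc_simplices G = {\<sigma>. finite \<sigma> \<and> (\<exists>v\<in>verts G. \<sigma> \<subseteq> nbhd G v)}"

definition nc_isomorphic :: "'a graph \<Rightarrow> 'b graph \<Rightarrow> bool" where
  "nc_isomorphic G H \<longleftrightarrow> (\<exists>f. bij_betw f (nc_verts G) (nc_verts H) \<and>
     (\<forall>\<sigma>. \<sigma> \<subseteq> nc_verts G \<longrightarrow> (\<sigma> \<in> nc_simplices G \<longleftrightarrow> f ` \<sigma> \<in> nc_simplices H)))"

definition graph_hom :: "'a graph \<Rightarrow> 'b graph \<Rightarrow> ('a \<Rightarrow> 'b) \<Rightarrow> bool" where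
  "graph_hom G H f \<longleftrightarrow> (\<forall>x\<in>verts G. f x \<in> verts H) \<and>
     (\<forall>x y. (x, y) \<in> edges G \<longrightarrow> (f x, f y) \<in> edges H)"

definition K2_times :: "'a graph \<Rightarrow> (nat \<times> 'a) graph" where
  "K2_times G = ({1,2} \<times> verts G,
     {((i, x), (j, y)). i \<in> {1,2} \<and> j \<in> {1,2} \<and> i \<noteq> j \<and> (x, y) \<in> edges G})"

definition times_I :: "'a graph \<Rightarrow> nat \<Rightarrow> ('a \<times> nat) graph" where
  "times_I G n = (verts G \<times> {0..n},
     {((x, i), (x', j)). (x, x') \<in> edges G \<and> i \<le> n \<and> j \<le> n \<and> i \<le> j + 1 \<and> j \<le> i + 1})"

definition times_homotopic_step :: "'a graph \<Rightarrow> 'b graph \<Rightarrow> ('a \<Rightarrow> 'b) \<Rightarrow> ('a \<Rightarrow> 'b) \<Rightarrow> bool" where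
  "times_homotopic_step G H f g \<longleftrightarrow> graph_hom G H f \<and> graph_hom G H g \<and>
     (\<exists>n K. graph_hom (times_I G n) H K \<and>
        (\<forall>x\<in>verts G. K (x, 0) = f x \<and> K (x, n) = g x))"

definition times_homotopic :: "'a graph \<Rightarrow> 'b graph \<Rightarrow> ('a \<Rightarrow> 'b) \<Rightarrow> ('a \<Rightarrow> 'b) \<Rightarrow> bool" where
  "times_homotopic G H f g \<longleftrightarrow>
     (\<lambda>f g. f = g \<or> times_homotopic_step G H f g \<or> times_homotopic_step G H g f)\<^sup>*\<^sup>* f g"

definition times_homotopy_equivalent :: "'a graph \<Rightarrow> 'b graph \<Rightarrow> bool" where
  "times_homotopy_equivalent G H \<longleftrightarrow> (\<exists>f h. graph_hom G H f \<and> graph_hom H G h \<and>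
     times_homotopic G G (h \<circ> f) id \<and> times_homotopic H H (f \<circ> h) id)"

end

theory Submission
  imports Defs
begin

lemma K2_verts: "verts (K2_times G) = {1,2} \<times> verts G"
  by (simp add: K2_times_def verts_def)

lemma K2_edges: "((i,x),(j,y)) \<in> edges (K2_times G) \<longleftrightarrow>
   i \<in> {1,2} \<and> j \<in> {1,2} \<and> i \<noteq> j \<and> (x, y) \<in> edges G"
  by (simp add: K2_times_def edges_def)

lemma edge_nc:
  assumes "is_graph G" "(x,y) \<in> edges G"
  shows "x \<in> nc_verts G" "y \<in> nc_verts G" "x \<in> verts G" "y \<in> verts G" "(y,x) \<in> edges G"
proof -
  have s: "(y,x) \<in> edges G" using assms unfolding is_graph_def sym_def by blast
  have v: "x \<in> verts G" "y \<in> verts G" using assms unfolding is_graph_def by auto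
  show "x \<in> nc_verts G" using v assms unfolding nc_verts_def nbhd_def by auto
  show "y \<in> nc_verts G" using v s unfolding nc_verts_def nbhd_def by auto
  show "x \<in> verts G" "y \<in> verts G" by (rule v)+
  show "(y,x) \<in> edges G" by (rule s)
qed

lemma K2_sym:
  assumes "is_graph G" "(a,b) \<in> edges (K2_times G)"
  shows "(b,a) \<in> edges (K2_times G)"
  using assms edge_nc(5)[OF assms(1)]
  by (cases a; cases b) (auto simp: K2_edges)

lemma hom_comp: "graph_hom A B f \<Longrightarrow> graph_hom B C g \<Longrightarrow> graph_hom A C (g \<circ> f)"
  unfolding graph_hom_def comp_def by blast

definition FF :: "('a \<Rightarrow> 'b) \<Rightarrow> ('a \<Rightarrow> 'b) \<Rightarrow> nat \<times> 'a \<Rightarrow> nat \<times> 'b" where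
  "FF \<alpha> \<psi> = (\<lambda>(i,x). (i, if i = 1 then \<alpha> x else \<psi> x))"

lemma FF_hom:
  assumes G: "is_graph G" and H: "is_graph H"
    and al: "\<forall>x\<in>verts G. \<alpha> x \<in> verts H"
    and ps: "\<forall>x\<in>verts G. \<psi> x \<in> verts H \<and> \<alpha> ` nbhd G x \<subseteq> nbhd H (\<psi> x)"
  shows "graph_hom (K2_times G) (K2_times H) (FF \<alpha> \<psi>)"
  unfolding graph_hom_def
proof (intro conjI allI impI ballI)
  fix v assume "v \<in> verts (K2_times G)"
  then show "FF \<alpha> \<psi> v \<in> verts (K2_times H)"
    using al ps by (auto simp: K2_verts FF_def)
next
  fix a b assume e: "(a,b) \<in> edges (K2_times G)"
  obtain i x j y where ab: "a = (i,x)" "b = (j,y)" by (meson prod.exhaust)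
  with e have ij: "i \<in> {1,2}" "j \<in> {1,2}" "i \<noteq> j" and xy: "(x,y) \<in> edges G"
    by (auto simp: K2_edges)
  have vx: "x \<in> verts G" "y \<in> verts G" using edge_nc[OF G xy] by auto
  have yx: "(y,x) \<in> edges G" using edge_nc[OF G xy] by auto
  have "\<alpha> x \<in> nbhd H (\<psi> y)" using ps vx yx unfolding nbhd_def by blast
  then have 1: "(\<alpha> x, \<psi> y) \<in> edges H"
    using edge_nc(5)[OF H] unfolding nbhd_def by blast
  have "\<alpha> y \<in> nbhd H (\<psi> x)" using ps vx xy unfolding nbhd_def by blast
  then have 2: "(\<psi> x, \<alpha> y) \<in> edges H" unfolding nbhd_def by blast
  show "(FF \<alpha> \<psi> a, FF \<alpha> \<psi> b) \<in> edges (K2_times H)"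
    using ij 1 2 by (auto simp: ab FF_def K2_edges)
qed

lemma homotopic_id:
  assumes G: "is_graph G"
    and M: "graph_hom (K2_times G) (K2_times G) M"
    and cond: "\<forall>a b. (a,b) \<in> edges (K2_times G) \<longrightarrow> (M a, b) \<in> edges (K2_times G)"
  shows "times_homotopic (K2_times G) (K2_times G) M id"
proof -
  let ?K = "\<lambda>(v,t::nat). if t = 0 then M v else v"
  have idh: "graph_hom (K2_times G) (K2_times G) id" by (simp add: graph_hom_def)
  have "graph_hom (times_I (K2_times G) 1) (K2_times G) ?K"
    unfolding graph_hom_def
  proof (intro conjI allI impI ballI)
    fix p assume "p \<in> verts (times_I (K2_times G) 1)"
    then show "?K p \<in> verts (K2_times G)" using M
      by (auto simp: times_I_def verts_def graph_hom_def)
  next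
    fix p q assume "(p,q) \<in> edges (times_I (K2_times G) 1)"
    then obtain a s b t where pq: "p = (a,s)" "q = (b,t)" and ab: "(a,b) \<in> edges (K2_times G)"
      by (auto simp: times_I_def edges_def)
    have "(M a, M b) \<in> edges (K2_times G)" using M ab unfolding graph_hom_def by blast
    moreover have "(M a, b) \<in> edges (K2_times G)" using cond ab by blast
    moreover have "(a, M b) \<in> edges (K2_times G)"
      using cond K2_sym[OF G ab] K2_sym[OF G] by blast
    ultimately show "(?K p, ?K q) \<in> edges (K2_times G)" using ab by (auto simp: pq)
  qed
  then have "times_homotopic_step (K2_times G) (K2_times G) M id"
    unfolding times_homotopic_step_def using M idh by (intro conjI exI[of _ 1]) auto
  then show ?thesis unfolding times_homotopic_def by auto
qed

lemma main_dir:
  assumes G: "is_graph G" and H: "is_graph H"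
    and al: "\<forall>x\<in>verts G. \<alpha> x \<in> verts H"
    and be: "\<forall>y\<in>verts H. \<beta> y \<in> verts G"
    and inv: "\<forall>x\<in>nc_verts G. \<beta> (\<alpha> x) = x"
    and ps: "\<forall>x\<in>verts G. \<psi> x \<in> verts H \<and> \<alpha> ` nbhd G x \<subseteq> nbhd H (\<psi> x)"
    and ps': "\<forall>y\<in>verts H. \<psi>' y \<in> verts G \<and> \<beta> ` nbhd H y \<subseteq> nbhd G (\<psi>' y)"
  shows "times_homotopic (K2_times G) (K2_times G) (FF \<beta> \<psi>' \<circ> FF \<alpha> \<psi>) id"
proof (rule homotopic_id[OF G])
  show "graph_hom (K2_times G) (K2_times G) (FF \<beta> \<psi>' \<circ> FF \<alpha> \<psi>)"
    using hom_comp[OF FF_hom[OF G H al ps] FF_hom[OF H G be ps']] .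
  show "\<forall>a b. (a, b) \<in> edges (K2_times G) \<longrightarrow> ((FF \<beta> \<psi>' \<circ> FF \<alpha> \<psi>) a, b) \<in> edges (K2_times G)"
  proof (intro allI impI)
    fix a b assume e: "(a,b) \<in> edges (K2_times G)"
    obtain i x j y where ab: "a = (i,x)" "b = (j,y)" by (meson prod.exhaust)
    with e have ij: "i \<in> {1,2}" "j \<in> {1,2}" "i \<noteq> j" and xy: "(x,y) \<in> edges G"
      by (auto simp: K2_edges)
    note en = edge_nc[OF G xy]
    have c1: "\<beta> (\<alpha> x) = x" using inv en by blast
    have "y \<in> nbhd G x" using xy by (simp add: nbhd_def)
    then have "\<alpha> y \<in> nbhd H (\<psi> x)" using ps en by blast
    moreover have "\<psi> x \<in> verts H" using ps en by blast
    ultimately have "\<beta> (\<alpha> y) \<in> nbhd G (\<psi>' (\<psi> x))" using ps' by blast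
    then have c2: "(\<psi>' (\<psi> x), y) \<in> edges G" using inv en by (simp add: nbhd_def)
    show "((FF \<beta> \<psi>' \<circ> FF \<alpha> \<psi>) a, b) \<in> edges (K2_times G)"
      using ij c1 c2 xy by (auto simp: ab FF_def K2_edges)
  qed
qed

theorem proposition4p10:
  fixes G :: "'a graph" and H :: "'b graph"
  assumes "is_graph G" and "is_graph H"
    and "verts G \<noteq> {}" and "verts H \<noteq> {}"
    and "locally_finite G" and "locally_finite H"
    and "nc_isomorphic G H"
  shows "times_homotopy_equivalent (K2_times G) (K2_times H)"
proof -
  note G = assms(1) and H = assms(2)
  obtain \<phi> where bij: "bij_betw \<phi> (nc_verts G) (nc_verts H)"
    and simp: "\<forall>\<sigma>. \<sigma> \<subseteq> nc_verts G \<longrightarrow> (\<sigma> \<in> nc_simplices G \<longleftrightarrow> \<phi> ` \<sigma> \<in> nc_simplices H)"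
    using assms(7) unfolding nc_isomorphic_def by blast
  obtain h0 where h0: "h0 \<in> verts H" using assms(4) by blast
  obtain g0 where g0: "g0 \<in> verts G" using assms(3) by blast
  define \<alpha> where "\<alpha> x = (if x \<in> nc_verts G then \<phi> x else h0)" for x
  define \<beta> where "\<beta> y = (if y \<in> nc_verts H then inv_into (nc_verts G) \<phi> y else g0)" for y
  have ncG: "nc_verts G \<subseteq> verts G" and ncH: "nc_verts H \<subseteq> verts H"
    by (auto simp: nc_verts_def)
  have al: "\<forall>x\<in>verts G. \<alpha> x \<in> verts H"
    using bij ncH h0 unfolding \<alpha>_def bij_betw_def by auto
  have be: "\<forall>y\<in>verts H. \<beta> y \<in> verts G"
    using bij ncG g0 unfolding \<beta>_def bij_betw_def by (auto intro!: subsetD[OF ncG] inv_into_into)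
  have invG: "\<forall>x\<in>nc_verts G. \<beta> (\<alpha> x) = x"
    using bij unfolding \<alpha>_def \<beta>_def bij_betw_def by (auto simp: inv_into_f_f)
  have invH: "\<forall>y\<in>nc_verts H. \<alpha> (\<beta> y) = y"
    using bij unfolding \<alpha>_def \<beta>_def
    by (auto simp: bij_betw_inv_into_right bij_betw_inv_into_left inv_into_into bij_betw_def)
  have nbG: "nbhd G x \<subseteq> nc_verts G" for x
    using edge_nc[OF G] by (auto simp: nbhd_def)
  have nbH: "nbhd H y \<subseteq> nc_verts H" for y
    using edge_nc[OF H] by (auto simp: nbhd_def)
  have exG: "\<exists>w. w \<in> verts H \<and> \<alpha> ` nbhd G x \<subseteq> nbhd H w" if x: "x \<in> verts G" for x
  proof -
    have "nbhd G x \<in> nc_simplices G"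
      using assms(5) x unfolding nc_simplices_def locally_finite_def by auto
    then have "\<phi> ` nbhd G x \<in> nc_simplices H" using simp nbG by blast
    moreover have "\<alpha> ` nbhd G x = \<phi> ` nbhd G x" using nbG unfolding \<alpha>_def by auto
    ultimately show ?thesis unfolding nc_simplices_def by auto
  qed
  have exH: "\<exists>w. w \<in> verts G \<and> \<beta> ` nbhd H y \<subseteq> nbhd G w" if y: "y \<in> verts H" for y
  proof -
    have fin: "nbhd H y \<in> nc_simplices H"
      using assms(6) y unfolding nc_simplices_def locally_finite_def by auto
    have sub: "\<beta> ` nbhd H y \<subseteq> nc_verts G"
      using nbH bij unfolding \<beta>_def bij_betw_def by (auto intro: inv_into_into)
    have "\<phi> ` (\<beta> ` nbhd H y) = nbhd H y"
    proof -
      have "\<phi> ` (\<beta> ` nbhd H y) = \<alpha> ` (\<beta> ` nbhd H y)" using sub unfolding \<alpha>_def by auto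
      also have "\<dots> = nbhd H y" using invH nbH by (force simp: image_image)
      finally show ?thesis .
    qed
    then have "\<beta> ` nbhd H y \<in> nc_simplices G" using simp sub fin by metis
    then show ?thesis unfolding nc_simplices_def by auto
  qed
  define \<psi> where "\<psi> x = (SOME w. w \<in> verts H \<and> \<alpha> ` nbhd G x \<subseteq> nbhd H w)" for x
  define \<psi>' where "\<psi>' y = (SOME w. w \<in> verts G \<and> \<beta> ` nbhd H y \<subseteq> nbhd G w)" for y
  have ps: "\<forall>x\<in>verts G. \<psi> x \<in> verts H \<and> \<alpha> ` nbhd G x \<subseteq> nbhd H (\<psi> x)"
    unfolding \<psi>_def using exG by (metis (mono_tags, lifting) someI_ex)
  have ps': "\<forall>y\<in>verts H. \<psi>' y \<in> verts G \<and> \<beta> ` nbhd H y \<subseteq> nbhd G (\<psi>' y)"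
    unfolding \<psi>'_def using exH by (metis (mono_tags, lifting) someI_ex)
  show ?thesis unfolding times_homotopy_equivalent_def
    using FF_hom[OF G H al ps] FF_hom[OF H G be ps']
      main_dir[OF G H al be invG ps ps'] main_dir[OF H G be al invH ps' ps]
    by blast
qed

end
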